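(* Let $d\in\mathbb{N}$. A probability distribution of an $\mathbb{N}^d$-valued random vector $(\tau_1,\ldots,\tau_d)$ satisfies the local discrete multivariate lack-of-memory property, i.e. for every $k\in\{1,\ldots,d\}$, all $1\le i_1,\ldots,i_k\le d$ and all $m,n_{i_1},\ldots,n_{i_k}\in\mathbb{N}_0$, $$\mathbb{P}(\tau_{i_1}>n_{i_1}+m,\ldots,\tau_{i_k}>n_{i_k}+m\mid \tau_{i_1}>m,\ldots,\tau_{i_k}>m)=\mathbb{P}(\tau_{i_1}>n_{i_1},\ldots,\tau_{i_k}>n_{i_k}),$$ if and only if it is a $d$-variate wide-sense geometric law $\mathcal{G}^{\mathcal W}(\tilde{\mathbf p})$ for some admissible parameters $\tilde{\mathbf p}$. In that case one can take $\tilde p_I=\mathbb{P}(\{\tau_i>1\ \forall i\notin I\}\cap\{\tau_i=1\ \forall i\in I\})$, $I\subseteq\{1,\ldots,d\}$.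
   Context: $\mathbb{N}=\{1,2,\ldots\}$, $\mathbb{N}_0=\{0\}\cup\mathbb{N}$. Wide-sense geometric law $\mathcal{G}^{\mathcal W}(\tilde{\mathbf p})$: given parameters $\tilde p_I\in[0,1]$, $I\subseteq\{1,\ldots,d\}$ (including $I=\emptyset$), with $\sum_I\tilde p_I=1$ and $\sum_{I:k\notin I}\tilde p_I<1$ for each $k=1,\ldots,d$, run i.i.d. trials of an experiment whose outcome is the set $I$ with probability $\tilde p_I$; let $\tilde E_I$ be the index of the first trial with outcome $I$, and set $\tau_k:=\min\{\tilde E_I: k\in I\}$; the law of $(\tau_1,\ldots,\tau_d)$ is $\mathcal{G}^{\mathcal W}(\tilde{\mathbf p})$. *)

theory Defs
  imports "HOL-Probability.Probability" "HOL-Probability.Stream_Space"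
begin

text \<open>Random vectors in N^d are encoded as functions t :: nat => nat, where
  t i is the i-th coordinate for i in {1..d} and t i = 0 outside {1..d}.\<close>

definition local_lmp :: "nat \<Rightarrow> (nat \<Rightarrow> nat) pmf \<Rightarrow> bool" where
  "local_lmp d P \<longleftrightarrow>
     (\<forall>k \<in> {1..d}. \<forall>i :: nat \<Rightarrow> nat. \<forall>n :: nat \<Rightarrow> nat. \<forall>m :: nat.
        (\<forall>j \<in> {1..k}. i j \<in> {1..d}) \<longrightarrow>
        (let B = {t. \<forall>j \<in> {1..k}. t (i j) > m};
             A = {t. \<forall>j \<in> {1..k}. t (i j) > n j + m};
             A0 = {t. \<forall>j \<in> {1..k}. t (i j) > n j}
         in measure_pmf.prob P B > 0 \<longrightarrow>
            measure_pmf.prob P (A \<inter> B) / measure_pmf.prob P B = measure_pmf.prob P A0))"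

definition wsg_admissible :: "nat \<Rightarrow> (nat set \<Rightarrow> real) \<Rightarrow> bool" where
  "wsg_admissible d p \<longleftrightarrow>
     (\<forall>I \<in> Pow {1..d}. 0 \<le> p I \<and> p I \<le> 1) \<and>
     (\<Sum>I \<in> Pow {1..d}. p I) = 1 \<and>
     (\<forall>k \<in> {1..d}. (\<Sum>I \<in> {I \<in> Pow {1..d}. k \<notin> I}. p I) < 1)"

definition trial_pmf :: "nat \<Rightarrow> (nat set \<Rightarrow> real) \<Rightarrow> nat set pmf" where
  "trial_pmf d p = embed_pmf (\<lambda>I. if I \<subseteq> {1..d} then p I else 0)"

text \<open>Index (starting from 1) of the first trial with outcome I; infinity if none.\<close>
definition first_trial :: "nat set stream \<Rightarrow> nat set \<Rightarrow> enat" where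
  "first_trial \<omega> I = (if \<exists>n. \<omega> !! n = I then enat (Suc (LEAST n. \<omega> !! n = I)) else \<infinity>)"

definition wsg_tau :: "nat \<Rightarrow> nat set stream \<Rightarrow> nat \<Rightarrow> enat" where
  "wsg_tau d \<omega> k = Min {first_trial \<omega> I | I. I \<subseteq> {1..d} \<and> k \<in> I}"

definition wsg_vec :: "nat \<Rightarrow> nat set stream \<Rightarrow> (nat \<Rightarrow> nat)" where
  "wsg_vec d \<omega> = (\<lambda>k. if k \<in> {1..d} then the_enat (wsg_tau d \<omega> k) else 0)"

definition wsg_law :: "nat \<Rightarrow> (nat set \<Rightarrow> real) \<Rightarrow> (nat \<Rightarrow> nat) measure" where
  "wsg_law d p = distr (stream_space (measure_pmf (trial_pmf d p))) (count_space UNIV) (wsg_vec d)"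

end

theory Submission
  imports Defs
begin

lemma snth_pred: "Measurable.pred (stream_space (measure_pmf q)) (\<lambda>x. P (x !! r))"
  by (rule measurable_compose[OF measurable_snth]) (simp add: measurable_def)

lemma all_less_Suc_split: "(\<forall>r<Suc N. P r) \<longleftrightarrow> P 0 \<and> (\<forall>r<N. P (Suc r))"
  by (auto simp: less_Suc_eq_0_disj)

lemma stream_prod:
  fixes q :: "'a pmf"
  shows "emeasure (stream_space (measure_pmf q)) {\<omega>. \<forall>r<N. \<omega> !! r \<in> A r}
     = (\<Prod>r<N. emeasure (measure_pmf q) (A r))"
proof (induction N arbitrary: A)
  case 0
  interpret S: prob_space "stream_space (measure_pmf q)"
    by (rule prob_space.prob_space_stream_space[OF measure_pmf.prob_space_axioms])
  show ?case using S.emeasure_space_1 by (simp add: space_stream_space)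
next
  case (Suc N)
  have meas: "{\<omega>. \<forall>r<Suc N. \<omega> !! r \<in> A r} \<in> sets (stream_space (measure_pmf q))"
  proof -
    have "{\<omega>. \<forall>r<Suc N. \<omega> !! r \<in> A r} = {\<omega>\<in>space (stream_space (measure_pmf q)). \<forall>r\<in>{..<Suc N}. \<omega> !! r \<in> A r}"
      by (auto simp: space_stream_space)
    also have "\<dots> \<in> sets (stream_space (measure_pmf q))"
      by (intro predE pred_intros_finite) (auto intro: snth_pred)
    finally show ?thesis .
  qed
  have "emeasure (stream_space (measure_pmf q)) {\<omega>. \<forall>r<Suc N. \<omega> !! r \<in> A r}
     = (\<integral>\<^sup>+t. emeasure (stream_space (measure_pmf q)) {x\<in>space (stream_space (measure_pmf q)). t ## x \<in> {\<omega>. \<forall>r<Suc N. \<omega> !! r \<in> A r}} \<partial>measure_pmf q)"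
    by (rule prob_space.emeasure_stream_space[OF measure_pmf.prob_space_axioms meas])
  also have "\<dots> = (\<integral>\<^sup>+t. indicator (A 0) t * (\<Prod>r<N. emeasure (measure_pmf q) (A (Suc r))) \<partial>measure_pmf q)"
  proof (rule nn_integral_cong)
    fix t
    have "{x\<in>space (stream_space (measure_pmf q)). t ## x \<in> {\<omega>. \<forall>r<Suc N. \<omega> !! r \<in> A r}}
        = (if t \<in> A 0 then {\<omega>. \<forall>r<N. \<omega> !! r \<in> A (Suc r)} else {})"
      by (auto simp: space_stream_space all_less_Suc_split)
    then show "emeasure (stream_space (measure_pmf q)) {x\<in>space (stream_space (measure_pmf q)). t ## x \<in> {\<omega>. \<forall>r<Suc N. \<omega> !! r \<in> A r}}
        = indicator (A 0) t * (\<Prod>r<N. emeasure (measure_pmf q) (A (Suc r)))"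
      using Suc.IH[of "\<lambda>r. A (Suc r)"] by (auto simp: indicator_def)
  qed
  also have "\<dots> = emeasure (measure_pmf q) (A 0) * (\<Prod>r<N. emeasure (measure_pmf q) (A (Suc r)))"
    by (simp add: nn_integral_multc)
  also have "\<dots> = (\<Prod>r<Suc N. emeasure (measure_pmf q) (A r))"
    by (simp only: prod.lessThan_Suc_shift)
  finally show ?case .
qed



lemma trial_pmf_pmf:
  assumes "wsg_admissible d p"
  shows "pmf (trial_pmf d p) J = (if J \<subseteq> {1..d} then p J else 0)"
proof -
  let ?f = "\<lambda>I. if I \<subseteq> {1..d} then p I else 0"
  have nn: "\<And>x. 0 \<le> ?f x" using assms by (auto simp: wsg_admissible_def)
  have "(\<integral>\<^sup>+x. ennreal (?f x) \<partial>count_space UNIV) = (\<Sum>x\<in>Pow {1..d}. ennreal (?f x))"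
    by (rule nn_integral_count_space') auto
  also have "\<dots> = ennreal (\<Sum>x\<in>Pow {1..d}. ?f x)"
    by (intro sum_ennreal) (rule nn)
  also have "(\<Sum>x\<in>Pow {1..d}. ?f x) = (\<Sum>x\<in>Pow {1..d}. p x)"
    by (rule sum.cong) auto
  also have "\<dots> = 1" using assms by (simp add: wsg_admissible_def)
  finally have "(\<integral>\<^sup>+x. ennreal (?f x) \<partial>count_space UNIV) = 1" by simp
  then show ?thesis unfolding trial_pmf_def
    using pmf_embed_pmf[of ?f, OF nn] by simp
qed

lemma trial_measure:
  assumes "wsg_admissible d p"
  shows "measure (measure_pmf (trial_pmf d p)) X = (\<Sum>J\<in>{J\<in>Pow {1..d}. J \<in> X}. p J)"
proof -
  let ?q = "trial_pmf d p"
  have sub: "set_pmf ?q \<subseteq> Pow {1..d}"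
    using trial_pmf_pmf[OF assms] by (auto simp: set_pmf_eq split: if_splits)
  have "measure ?q X = measure ?q (X \<inter> set_pmf ?q)" by (simp add: measure_Int_set_pmf)
  also have "X \<inter> set_pmf ?q = {J\<in>Pow {1..d}. J \<in> X} \<inter> set_pmf ?q" using sub by auto
  also have "measure ?q \<dots> = measure ?q {J\<in>Pow {1..d}. J \<in> X}" by (simp add: measure_Int_set_pmf)
  also have "\<dots> = (\<Sum>J\<in>{J\<in>Pow {1..d}. J \<in> X}. pmf ?q J)"
    by (rule measure_measure_pmf_finite) auto
  also have "\<dots> = (\<Sum>J\<in>{J\<in>Pow {1..d}. J \<in> X}. p J)"
    by (rule sum.cong) (auto simp: trial_pmf_pmf[OF assms])
  finally show ?thesis .
qed

lemma first_trial_gt: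
  "(enat c < first_trial \<omega> I) \<longleftrightarrow> (\<forall>r<c. \<omega> !! r \<noteq> I)"
proof (cases "\<exists>n. \<omega> !! n = I")
  case True
  then have ft: "first_trial \<omega> I = enat (Suc (LEAST n. \<omega> !! n = I))"
    by (simp add: first_trial_def)
  show ?thesis
  proof
    assume "enat c < first_trial \<omega> I"
    then have "c \<le> (LEAST n. \<omega> !! n = I)" by (simp add: ft)
    show "\<forall>r<c. \<omega> !! r \<noteq> I"
    proof (intro allI impI)
      fix r assume "r < c"
      with \<open>c \<le> (LEAST n. \<omega> !! n = I)\<close> have "r < (LEAST n. \<omega> !! n = I)" by simp
      then show "\<omega> !! r \<noteq> I" by (rule not_less_Least)
    qed
  next
    assume h: "\<forall>r<c. \<omega> !! r \<noteq> I"
    have "\<omega> !! (LEAST n. \<omega> !! n = I) = I" using True by (rule LeastI_ex)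
    then have "\<not> (LEAST n. \<omega> !! n = I) < c" using h by blast
    then show "enat c < first_trial \<omega> I" by (simp add: ft)
  qed
next
  case False
  then show ?thesis by (simp add: first_trial_def)
qed

lemma tau_gt:
  assumes "x \<in> {1..d}"
  shows "(enat c < wsg_tau d \<omega> x) \<longleftrightarrow> (\<forall>r<c. \<not> (x \<in> \<omega> !! r \<and> \<omega> !! r \<subseteq> {1..d}))"
proof -
  let ?F = "{first_trial \<omega> I | I. I \<subseteq> {1..d} \<and> x \<in> I}"
  have fin: "finite ?F"
  proof -
    have "?F \<subseteq> (first_trial \<omega>) ` Pow {1..d}" by auto
    then show ?thesis by (rule finite_subset) auto
  qed
  have ne: "?F \<noteq> {}" using assms by auto
  have "(enat c < wsg_tau d \<omega> x) \<longleftrightarrow> (\<forall>f\<in>?F. enat c < f)"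
    unfolding wsg_tau_def using Min_gr_iff[OF fin ne] by simp
  also have "\<dots> \<longleftrightarrow> (\<forall>I. I \<subseteq> {1..d} \<and> x \<in> I \<longrightarrow> enat c < first_trial \<omega> I)"
    by blast
  also have "\<dots> \<longleftrightarrow> (\<forall>I. I \<subseteq> {1..d} \<and> x \<in> I \<longrightarrow> (\<forall>r<c. \<omega> !! r \<noteq> I))"
    by (simp only: first_trial_gt)
  also have "\<dots> \<longleftrightarrow> (\<forall>r<c. \<not> (x \<in> \<omega> !! r \<and> \<omega> !! r \<subseteq> {1..d}))"
    by blast
  finally show ?thesis .
qed



lemma stream_prod_real:
  fixes q :: "'a pmf"
  shows "measure (stream_space (measure_pmf q)) {\<omega>. \<forall>r<N. \<omega> !! r \<in> A r}
     = (\<Prod>r<N. measure (measure_pmf q) (A r))"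
proof -
  interpret S: prob_space "stream_space (measure_pmf q)"
    by (rule prob_space.prob_space_stream_space[OF measure_pmf.prob_space_axioms])
  have "ennreal (measure (stream_space (measure_pmf q)) {\<omega>. \<forall>r<N. \<omega> !! r \<in> A r})
     = ennreal (\<Prod>r<N. measure (measure_pmf q) (A r))"
    using stream_prod[of q N A]
    by (simp add: S.emeasure_eq_measure measure_pmf.emeasure_eq_measure prod_ennreal)
  then show ?thesis by (simp add: prod_nonneg)
qed

lemma stream_set_meas:
  "{\<omega>. \<forall>r<N. P r (\<omega> !! r)} \<in> sets (stream_space (measure_pmf q))"
proof -
  have "{\<omega>. \<forall>r<N. P r (\<omega> !! r)} = {\<omega>\<in>space (stream_space (measure_pmf q)). \<forall>r\<in>{..<N}. P r (\<omega> !! r)}"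
    by (auto simp: space_stream_space)
  also have "\<dots> \<in> sets (stream_space (measure_pmf q))"
    by (intro predE pred_intros_finite) (auto intro: snth_pred)
  finally show ?thesis .
qed

lemma enat_meas:
  fixes g :: "'a \<Rightarrow> enat"
  assumes "\<And>c. {\<omega>\<in>space M. enat c < g \<omega>} \<in> sets M"
  shows "g \<in> measurable M (count_space UNIV)"
proof -
  have "g -` {e} \<inter> space M \<in> sets M" for e
  proof (cases e)
    case (enat n)
    show ?thesis
    proof (cases n)
      case 0
      have "g -` {e} \<inter> space M = space M - {\<omega>\<in>space M. enat 0 < g \<omega>}"
      proof -
        have "\<And>v::enat. v = enat 0 \<longleftrightarrow> \<not> enat 0 < v" by (case_tac v) auto
        then show ?thesis unfolding enat 0 by blast
      qed
      then show ?thesis using assms by auto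
    next
      case (Suc m)
      have "g -` {e} \<inter> space M = {\<omega>\<in>space M. enat m < g \<omega>} - {\<omega>\<in>space M. enat (Suc m) < g \<omega>}"
      proof -
        have "\<And>v::enat. v = enat (Suc m) \<longleftrightarrow> enat m < v \<and> \<not> enat (Suc m) < v" by (case_tac v) auto
        then show ?thesis unfolding enat Suc by blast
      qed
      then show ?thesis using assms by auto
    qed
  next
    case infinity
    have "g -` {e} \<inter> space M = (\<Inter>c. {\<omega>\<in>space M. enat c < g \<omega>}) \<inter> space M"
    proof -
      have "\<And>v::enat. v = \<infinity> \<longleftrightarrow> (\<forall>c. enat c < v)" by (case_tac v) auto
      then show ?thesis unfolding infinity by blast
    qed
    then show ?thesis using assms by auto
  qed
  then show ?thesis
    by (subst measurable_count_space_eq2_countable) auto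
qed



definition Cset :: "nat \<Rightarrow> (nat \<Rightarrow> nat) set" where
  "Cset d = {t. \<forall>i. i \<notin> {1..d} \<longrightarrow> t i = 0}"

definition ell :: "nat \<Rightarrow> (nat set \<Rightarrow> real) \<Rightarrow> nat set \<Rightarrow> real" where
  "ell d p K = (\<Sum>I\<in>{I\<in>Pow {1..d}. I \<inter> K = {}}. p I)"

lemma countable_Cset: "countable (Cset d)"
proof -
  let ?h = "\<lambda>(xs::nat list) i. if i \<in> {1..d} then xs ! (i - 1) else 0"
  have "Cset d \<subseteq> ?h ` UNIV"
  proof
    fix t assume t: "t \<in> Cset d"
    have "t = ?h (map t [1..<d+1])"
    proof
      fix i show "t i = ?h (map t [1..<d+1]) i"
        using t by (cases "i \<in> {1..d}") (auto simp: Cset_def nth_map simp del: upt_Suc)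
    qed
    then show "t \<in> ?h ` UNIV" by blast
  qed
  then show ?thesis by (rule countable_subset) simp
qed

lemma tau_meas:
  assumes "x \<in> {1..d}"
  shows "(\<lambda>\<omega>. wsg_tau d \<omega> x) \<in> measurable (stream_space (measure_pmf q)) (count_space UNIV)"
proof (rule enat_meas)
  fix c
  have "{\<omega> \<in> space (stream_space (measure_pmf q)). enat c < wsg_tau d \<omega> x}
      = {\<omega>. \<forall>r<c. (\<lambda>r S. \<not> (x \<in> S \<and> S \<subseteq> {1..d})) r (\<omega> !! r)}"
    using tau_gt[OF assms] by (auto simp: space_stream_space)
  also have "\<dots> \<in> sets (stream_space (measure_pmf q))" by (rule stream_set_meas)
  finally show "{\<omega> \<in> space (stream_space (measure_pmf q)). enat c < wsg_tau d \<omega> x} \<in> sets (stream_space (measure_pmf q))" .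
qed

lemma meas_countable_range:
  assumes "countable C" "\<And>\<omega>. \<omega> \<in> space M \<Longrightarrow> f \<omega> \<in> C"
    "\<And>t. t \<in> C \<Longrightarrow> f -` {t} \<inter> space M \<in> sets M"
  shows "f \<in> measurable M (count_space UNIV)"
proof (rule measurableI)
  fix A
  have "f -` A \<inter> space M = (\<Union>t\<in>A \<inter> C. f -` {t} \<inter> space M)"
    using assms(2) by auto
  also have "\<dots> \<in> sets M"
    using assms(1,3) by (intro sets.countable_UN'') (auto intro: countable_subset)
  finally show "f -` A \<inter> space M \<in> sets M" .
qed simp

lemma wsg_vec_meas:
  "wsg_vec d \<in> measurable (stream_space (measure_pmf q)) (count_space UNIV)"
proof (rule meas_countable_range[OF countable_Cset[of d]])
  fix \<omega> show "wsg_vec d \<omega> \<in> Cset d" by (simp add: wsg_vec_def Cset_def)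
next
  fix t assume t: "t \<in> Cset d"
  have "wsg_vec d -` {t} \<inter> space (stream_space (measure_pmf q))
     = {\<omega> \<in> space (stream_space (measure_pmf q)). \<forall>k\<in>{1..d}. the_enat (wsg_tau d \<omega> k) = t k}"
  proof (intro set_eqI iffI)
    fix \<omega> assume "\<omega> \<in> {\<omega> \<in> space (stream_space (measure_pmf q)). \<forall>k\<in>{1..d}. the_enat (wsg_tau d \<omega> k) = t k}"
    then show "\<omega> \<in> wsg_vec d -` {t} \<inter> space (stream_space (measure_pmf q))"
      using t by (auto simp: wsg_vec_def Cset_def fun_eq_iff)
  qed (auto simp: wsg_vec_def)
  also have "\<dots> \<in> sets (stream_space (measure_pmf q))"
  proof (intro predE pred_intros_finite)
    fix k assume k: "k \<in> {1..d}"
    show "Measurable.pred (stream_space (measure_pmf q)) (\<lambda>\<omega>. the_enat (wsg_tau d \<omega> k) = t k)"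
      by (rule measurable_compose[OF tau_meas[OF k] measurable_count_space])
  qed simp
  finally show "wsg_vec d -` {t} \<inter> space (stream_space (measure_pmf q)) \<in> sets (stream_space (measure_pmf q))" .
qed

lemma tau_fin_AE:
  assumes adm: "wsg_admissible d p"
  shows "AE \<omega> in stream_space (measure_pmf (trial_pmf d p)). \<forall>x\<in>{1..d}. wsg_tau d \<omega> x \<noteq> \<infinity>"
proof (rule AE_finite_allI)
  fix x assume x: "x \<in> {1..d}"
  let ?q = "trial_pmf d p"
  let ?M = "stream_space (measure_pmf ?q)"
  interpret S: prob_space ?M
    by (rule prob_space.prob_space_stream_space[OF measure_pmf.prob_space_axioms])
  let ?N = "(\<lambda>\<omega>. wsg_tau d \<omega> x) -` {\<infinity>} \<inter> space ?M"
  have Nsets: "?N \<in> sets ?M"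
    by (rule measurable_sets[OF tau_meas[OF x]]) simp
  let ?Av = "{S. \<not> (x \<in> S \<and> S \<subseteq> {1..d})}"
  let ?a = "measure (measure_pmf ?q) ?Av"
  have a_eq: "?a = (\<Sum>I\<in>{I \<in> Pow {1..d}. x \<notin> I}. p I)"
    unfolding trial_measure[OF adm] by (rule sum.cong) auto
  have a1: "?a < 1" using adm x unfolding a_eq wsg_admissible_def by blast
  have a0: "0 \<le> ?a" by simp
  have le: "measure ?M ?N \<le> ?a ^ n" for n
  proof -
    have "?N \<subseteq> {\<omega>. \<forall>r<n. \<omega> !! r \<in> ?Av}"
    proof
      fix \<omega> assume "\<omega> \<in> ?N"
      then have "enat n < wsg_tau d \<omega> x" by simp
      then show "\<omega> \<in> {\<omega>. \<forall>r<n. \<omega> !! r \<in> ?Av}" using tau_gt[OF x] by auto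
    qed
    then have "measure ?M ?N \<le> measure ?M {\<omega>. \<forall>r<n. \<omega> !! r \<in> ?Av}"
      using stream_set_meas[of n "\<lambda>r S. S \<in> ?Av"] by (intro S.finite_measure_mono) auto
    also have "\<dots> = ?a ^ n" using stream_prod_real[of ?q n "\<lambda>_. ?Av"] by simp
    finally show ?thesis .
  qed
  have "(\<lambda>n. ?a ^ n) \<longlonglongrightarrow> 0" using a0 a1 by (intro LIMSEQ_power_zero) simp
  then have "measure ?M ?N \<le> 0"
    by (rule LIMSEQ_le_const) (use le in auto)
  then have "measure ?M ?N = 0" by (simp add: antisym)
  then have "?N \<in> null_sets ?M" using Nsets by (simp add: S.emeasure_eq_measure null_sets_def)
  then show "AE \<omega> in ?M. wsg_tau d \<omega> x \<noteq> \<infinity>"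
    by (rule AE_I') auto
qed simp



lemma gen_formula:
  assumes adm: "wsg_admissible d p"
    and iJ: "\<forall>j\<in>J. i j \<in> {1..d}" and nN: "\<forall>j\<in>J. n j \<le> N"
  shows "measure (wsg_law d p) {t. \<forall>j\<in>J. n j < t (i j)}
       = (\<Prod>r<N. ell d p {i j | j. j \<in> J \<and> r < n j})"
proof -
  let ?q = "trial_pmf d p"
  let ?M = "stream_space (measure_pmf ?q)"
  let ?G = "{t. \<forall>j\<in>J. n j < t (i j)}"
  let ?A = "\<lambda>r. {S. \<not> (S \<subseteq> {1..d} \<and> (\<exists>j\<in>J. i j \<in> S \<and> r < n j))}"
  have "measure (wsg_law d p) ?G = measure ?M (wsg_vec d -` ?G \<inter> space ?M)"
    unfolding wsg_law_def by (rule measure_distr[OF wsg_vec_meas]) simp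
  also have "\<dots> = measure ?M {\<omega>. \<forall>r<N. \<omega> !! r \<in> ?A r}"
  proof (rule measure_eq_AE)
    show "AE \<omega> in ?M. (\<omega> \<in> wsg_vec d -` ?G \<inter> space ?M) = (\<omega> \<in> {\<omega>. \<forall>r<N. \<omega> !! r \<in> ?A r})"
      using tau_fin_AE[OF adm]
    proof (rule eventually_mono)
      fix \<omega> assume fin: "\<forall>x\<in>{1..d}. wsg_tau d \<omega> x \<noteq> \<infinity>"
      have "(\<omega> \<in> wsg_vec d -` ?G) \<longleftrightarrow> (\<forall>j\<in>J. enat (n j) < wsg_tau d \<omega> (i j))"
      proof -
        have "\<And>j. j \<in> J \<Longrightarrow> (n j < wsg_vec d \<omega> (i j)) \<longleftrightarrow> enat (n j) < wsg_tau d \<omega> (i j)"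
        proof -
          fix j assume j: "j \<in> J"
          then have ij: "i j \<in> {1..d}" using iJ by blast
          then have "wsg_tau d \<omega> (i j) \<noteq> \<infinity>" using fin by blast
          then obtain v where v: "wsg_tau d \<omega> (i j) = enat v" by (cases "wsg_tau d \<omega> (i j)") auto
          show "(n j < wsg_vec d \<omega> (i j)) \<longleftrightarrow> enat (n j) < wsg_tau d \<omega> (i j)"
            using ij v by (simp add: wsg_vec_def)
        qed
        then show ?thesis by auto
      qed
      also have "\<dots> \<longleftrightarrow> (\<forall>j\<in>J. \<forall>r<n j. \<not> (i j \<in> \<omega> !! r \<and> \<omega> !! r \<subseteq> {1..d}))"
        using tau_gt iJ by blast
      also have "\<dots> \<longleftrightarrow> (\<forall>r<N. \<omega> !! r \<in> ?A r)"
        using nN by (auto) (meson less_le_trans)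
      finally show "(\<omega> \<in> wsg_vec d -` ?G \<inter> space ?M) = (\<omega> \<in> {\<omega>. \<forall>r<N. \<omega> !! r \<in> ?A r})"
        by (simp add: space_stream_space)
    qed
    show "wsg_vec d -` ?G \<inter> space ?M \<in> sets ?M"
      by (rule measurable_sets[OF wsg_vec_meas]) simp
    show "{\<omega>. \<forall>r<N. \<omega> !! r \<in> ?A r} \<in> sets ?M"
      using stream_set_meas[of N "\<lambda>r S. S \<in> ?A r"] by simp
  qed
  also have "\<dots> = (\<Prod>r<N. measure (measure_pmf ?q) (?A r))" by (rule stream_prod_real)
  also have "\<dots> = (\<Prod>r<N. ell d p {i j | j. j \<in> J \<and> r < n j})"
  proof (rule prod.cong)
    fix r
    show "measure (measure_pmf ?q) (?A r) = ell d p {i j | j. j \<in> J \<and> r < n j}"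
      unfolding trial_measure[OF adm] ell_def by (rule sum.cong) auto
  qed simp
  finally show ?thesis .
qed



lemma prod_lessThan_add:
  fixes m n :: nat shows "(\<Prod>r<m + n. f r) = (\<Prod>r<m. f r) * (\<Prod>r<n. f (m + r)::real)"
  by (induction n) (simp_all add: mult.assoc)

lemma wsg_lmp:
  assumes adm: "wsg_admissible d p" and eq: "measure_pmf P = wsg_law d p"
  shows "local_lmp d P"
  unfolding local_lmp_def Let_def
proof (intro ballI allI impI)
  fix k :: nat and i :: "nat \<Rightarrow> nat" and n :: "nat \<Rightarrow> nat" and m :: nat
  assume k: "k \<in> {1..d}" and iJ: "\<forall>j\<in>{1..k}. i j \<in> {1..d}"
  let ?J = "{1..k}"
  let ?B = "{t. \<forall>j\<in>?J. m < t (i j)}"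
  let ?A = "{t. \<forall>j\<in>?J. n j + m < t (i j)}"
  let ?Z = "{t. \<forall>j\<in>?J. n j < t (i j)}"
  let ?Nn = "\<Sum>j\<in>?J. n j"
  let ?K = "i ` ?J"
  assume pos: "measure_pmf.prob P ?B > 0"
  have nle: "\<forall>j\<in>?J. n j \<le> ?Nn" by (auto intro: member_le_sum)
  have QB: "measure (wsg_law d p) ?B = (\<Prod>r<m. ell d p ?K)"
  proof -
    have "measure (wsg_law d p) ?B = (\<Prod>r<m. ell d p {i j | j. j \<in> ?J \<and> r < m})"
      by (rule gen_formula[OF adm iJ]) simp
    also have "\<dots> = (\<Prod>r<m. ell d p ?K)"
      by (rule prod.cong) (auto intro!: arg_cong[where f="ell d p"])
    finally show ?thesis .
  qed
  have QA0: "measure (wsg_law d p) ?Z = (\<Prod>r<?Nn. ell d p {i j | j. j \<in> ?J \<and> r < n j})"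
    by (rule gen_formula[OF adm iJ nle])
  have QA: "measure (wsg_law d p) ?A = (\<Prod>r<m + ?Nn. ell d p {i j | j. j \<in> ?J \<and> r < n j + m})"
    by (rule gen_formula[OF adm iJ]) (use nle in auto)
  also have "\<dots> = (\<Prod>r<m. ell d p {i j | j. j \<in> ?J \<and> r < n j + m}) *
                  (\<Prod>r<?Nn. ell d p {i j | j. j \<in> ?J \<and> m + r < n j + m})"
    by (rule prod_lessThan_add)
  also have "(\<Prod>r<m. ell d p {i j | j. j \<in> ?J \<and> r < n j + m}) = (\<Prod>r<m. ell d p ?K)"
    by (rule prod.cong) (auto intro!: arg_cong[where f="ell d p"])
  also have "(\<Prod>r<?Nn. ell d p {i j | j. j \<in> ?J \<and> m + r < n j + m})
           = (\<Prod>r<?Nn. ell d p {i j | j. j \<in> ?J \<and> r < n j})" by simp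
  finally have QA': "measure (wsg_law d p) ?A = measure (wsg_law d p) ?B * measure (wsg_law d p) ?Z"
    using QB QA0 by simp
  have AB: "?A \<inter> ?B = ?A" by auto
  show "measure_pmf.prob P (?A \<inter> ?B) / measure_pmf.prob P ?B = measure_pmf.prob P ?Z"
    using pos QA' unfolding AB eq by simp
qed



lemma prob_support_eq:
  assumes "\<And>t. t \<in> set_pmf P \<Longrightarrow> (t \<in> X \<longleftrightarrow> t \<in> Y)"
  shows "measure_pmf.prob P X = measure_pmf.prob P Y"
proof -
  have "X \<inter> set_pmf P = Y \<inter> set_pmf P" using assms by auto
  then show ?thesis by (metis measure_Int_set_pmf)
qed

lemma enum_all:
  assumes "finite K"
  shows "(\<forall>j\<in>{1..card K}. Q (sorted_list_of_set K ! (j - 1))) \<longleftrightarrow> (\<forall>x\<in>K. Q x)"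
proof -
  let ?xs = "sorted_list_of_set K"
  have s: "set ?xs = K" and l: "length ?xs = card K" using assms by auto
  show ?thesis
  proof
    assume h: "\<forall>j\<in>{1..card K}. Q (?xs ! (j - 1))"
    show "\<forall>x\<in>K. Q x"
    proof
      fix x assume "x \<in> K"
      then obtain l where "l < length ?xs" "?xs ! l = x" using s by (metis in_set_conv_nth)
      then show "Q x" using h[rule_format, of "Suc l"] l by auto
    qed
  next
    assume h: "\<forall>x\<in>K. Q x"
    show "\<forall>j\<in>{1..card K}. Q (?xs ! (j - 1))"
    proof
      fix j assume "j \<in> {1..card K}"
      then have "j - 1 < length ?xs" using l by auto
      then have "?xs ! (j - 1) \<in> K" using s nth_mem by blast
      then show "Q (?xs ! (j - 1))" using h by blast
    qed
  qed
qed

lemma lmp_K: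
  assumes lmp: "local_lmp d P" and K: "K \<subseteq> {1..d}" "K \<noteq> {}"
    and pos: "measure_pmf.prob P {t. \<forall>x\<in>K. m < t x} > 0"
  shows "measure_pmf.prob P {t. \<forall>x\<in>K. n x + m < t x}
       = measure_pmf.prob P {t. \<forall>x\<in>K. m < t x} * measure_pmf.prob P {t. \<forall>x\<in>K. n x < t x}"
proof -
  have finK: "finite K" using K finite_subset by blast
  let ?xs = "sorted_list_of_set K"
  let ?k = "card K"
  let ?i = "\<lambda>j. ?xs ! (j - 1)"
  let ?n = "\<lambda>j. n (?i j)"
  have k: "?k \<in> {1..d}"
  proof -
    have "card K \<le> card {1..d}" by (rule card_mono) (use K in auto)
    moreover have "card K \<ge> 1" using finK K(2) by (simp add: Suc_le_eq card_gt_0_iff)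
    ultimately show ?thesis by simp
  qed
  have iJ: "\<forall>j\<in>{1..?k}. ?i j \<in> {1..d}"
    using enum_all[OF finK, of "\<lambda>x. x \<in> {1..d}"] K by blast
  have L1: "\<forall>i n m. (\<forall>j\<in>{1..?k}. i j \<in> {1..d}) \<longrightarrow>
      (measure_pmf.prob P {t. \<forall>j\<in>{1..?k}. m < t (i j)} > 0 \<longrightarrow>
     measure_pmf.prob P ({t. \<forall>j\<in>{1..?k}. n j + m < t (i j)} \<inter> {t. \<forall>j\<in>{1..?k}. m < t (i j)}) /
     measure_pmf.prob P {t. \<forall>j\<in>{1..?k}. m < t (i j)} = measure_pmf.prob P {t. \<forall>j\<in>{1..?k}. n j < t (i j)})"
    using lmp k unfolding local_lmp_def Let_def by blast
  from spec[OF spec[OF spec[OF L1, of ?i], of ?n], of m] iJ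
  have "measure_pmf.prob P {t. \<forall>j\<in>{1..?k}. m < t (?i j)} > 0 \<longrightarrow>
     measure_pmf.prob P ({t. \<forall>j\<in>{1..?k}. ?n j + m < t (?i j)} \<inter> {t. \<forall>j\<in>{1..?k}. m < t (?i j)}) /
     measure_pmf.prob P {t. \<forall>j\<in>{1..?k}. m < t (?i j)} = measure_pmf.prob P {t. \<forall>j\<in>{1..?k}. ?n j < t (?i j)}"
    by simp
  moreover have "{t. \<forall>j\<in>{1..?k}. m < t (?i j)} = {t. \<forall>x\<in>K. m < t x}"
    using enum_all[OF finK, of "\<lambda>x. m < _ x"] by auto
  moreover have "{t. \<forall>j\<in>{1..?k}. ?n j + m < t (?i j)} = {t. \<forall>x\<in>K. n x + m < t x}"
    using enum_all[OF finK, of "\<lambda>x. n x + m < _ x"] by auto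
  moreover have "{t. \<forall>j\<in>{1..?k}. ?n j < t (?i j)} = {t. \<forall>x\<in>K. n x < t x}"
    using enum_all[OF finK, of "\<lambda>x. n x < _ x"] by auto
  moreover have "{t. \<forall>x\<in>K. n x + m < t x} \<inter> {t. \<forall>x\<in>K. m < t x} = {t. \<forall>x\<in>K. n x + m < t x}"
    by auto
  ultimately show ?thesis using pos by (simp add: field_simps)
qed



definition aP :: "(nat \<Rightarrow> nat) pmf \<Rightarrow> nat set \<Rightarrow> real" where
  "aP P K = measure_pmf.prob P {t. \<forall>x\<in>K. 1 < t x}"

lemma aP_empty: "aP P {} = 1"
  by (simp add: aP_def)

lemma P_orth:
  assumes lmp: "local_lmp d P"
    and supp: "\<forall>t \<in> set_pmf P. (\<forall>i \<in> {1..d}. t i \<ge> 1) \<and> (\<forall>i. i \<notin> {1..d} \<longrightarrow> t i = 0)"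
  shows "(\<forall>x\<in>{1..d}. c x \<le> N) \<Longrightarrow>
    measure_pmf.prob P {t. \<forall>x\<in>{1..d}. c x < t x} = (\<Prod>r<N. aP P {x\<in>{1..d}. r < c x})"
proof (induction N arbitrary: c)
  case 0
  then have "measure_pmf.prob P {t. \<forall>x\<in>{1..d}. c x < t x} = measure_pmf.prob P UNIV"
    using supp by (intro prob_support_eq) fastforce
  then show ?case by simp
next
  case (Suc N)
  let ?K = "{x\<in>{1..d}. 0 < c x}"
  let ?c' = "\<lambda>x. c x - 1"
  have IH: "measure_pmf.prob P {t. \<forall>x\<in>{1..d}. ?c' x < t x} = (\<Prod>r<N. aP P {x\<in>{1..d}. r < ?c' x})"
    using Suc by (intro Suc.IH) auto
  have eqc: "measure_pmf.prob P {t. \<forall>x\<in>{1..d}. c x < t x} = measure_pmf.prob P {t. \<forall>x\<in>?K. (c x - 1) + 1 < t x}"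
    using supp by (intro prob_support_eq) fastforce
  have eqc': "measure_pmf.prob P {t. \<forall>x\<in>{1..d}. ?c' x < t x} = measure_pmf.prob P {t. \<forall>x\<in>?K. ?c' x < t x}"
    using supp by (intro prob_support_eq) fastforce
  have RHS: "(\<Prod>r<Suc N. aP P {x\<in>{1..d}. r < c x}) = aP P ?K * (\<Prod>r<N. aP P {x\<in>{1..d}. r < ?c' x})"
  proof -
    have "(\<Prod>r<Suc N. aP P {x\<in>{1..d}. r < c x}) = aP P {x\<in>{1..d}. 0 < c x} * (\<Prod>r<N. aP P {x\<in>{1..d}. Suc r < c x})"
      by (simp only: prod.lessThan_Suc_shift)
    also have "(\<Prod>r<N. aP P {x\<in>{1..d}. Suc r < c x}) = (\<Prod>r<N. aP P {x\<in>{1..d}. r < ?c' x})"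
      by (rule prod.cong) (auto intro!: arg_cong[where f="aP P"])
    finally show ?thesis .
  qed
  show ?case
  proof (cases "?K = {}")
    case True
    have "measure_pmf.prob P {t. \<forall>x\<in>{1..d}. c x < t x} = 1"
    proof -
      have "{t. \<forall>x\<in>?K. (c x - 1) + 1 < t x} = UNIV" using True by auto
      then show ?thesis using eqc by simp
    qed
    moreover have "(\<Prod>r<Suc N. aP P {x\<in>{1..d}. r < c x}) = 1"
    proof (rule prod.neutral, intro ballI)
      fix r assume "r \<in> {..<Suc N}"
      have "{x\<in>{1..d}. r < c x} = {}" using True by auto
      then show "aP P {x\<in>{1..d}. r < c x} = 1" by (simp only: aP_empty)
    qed
    ultimately show ?thesis by simp
  next
    case False
    have aK: "aP P ?K = measure_pmf.prob P {t. \<forall>x\<in>?K. 1 < t x}" by (simp add: aP_def)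
    show ?thesis
    proof (cases "measure_pmf.prob P {t. \<forall>x\<in>?K. 1 < t x} > 0")
      case True
      have "measure_pmf.prob P {t. \<forall>x\<in>?K. (c x - 1) + 1 < t x}
         = measure_pmf.prob P {t. \<forall>x\<in>?K. 1 < t x} * measure_pmf.prob P {t. \<forall>x\<in>?K. ?c' x < t x}"
        by (rule lmp_K[OF lmp _ False True]) auto
      then show ?thesis using eqc eqc' IH RHS aK by simp
    next
      case False
      then have z: "measure_pmf.prob P {t. \<forall>x\<in>?K. 1 < t x} = 0"
        using measure_nonneg[of "measure_pmf P" "{t. \<forall>x\<in>?K. 1 < t x}"] by linarith
      have "measure_pmf.prob P {t. \<forall>x\<in>?K. (c x - 1) + 1 < t x} \<le> measure_pmf.prob P {t. \<forall>x\<in>?K. 1 < t x}"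
        by (rule measure_pmf.finite_measure_mono) auto
      then have "measure_pmf.prob P {t. \<forall>x\<in>{1..d}. c x < t x} = 0"
        using eqc z by (simp add: measure_nonneg antisym)
      then show ?thesis using RHS aK z by simp
    qed
  qed
qed



lemma G_ind:
  fixes M1 M2 :: "(nat \<Rightarrow> nat) measure"
  assumes fm: "finite_measure M1" "finite_measure M2" and sets: "sets M1 = UNIV" "sets M2 = UNIV"
    and ort: "\<And>c. measure M1 {t. \<forall>x\<in>D. c x < t x} = measure M2 {t. \<forall>x\<in>D. c x < t x}"
    and fin: "finite A" and AD: "A \<subseteq> D"
  shows "\<forall>c. (\<forall>x\<in>A. 1 \<le> c x) \<longrightarrow>
    measure M1 {t. (\<forall>x\<in>A. t x = c x) \<and> (\<forall>x\<in>D-A. c x < t x)}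
  = measure M2 {t. (\<forall>x\<in>A. t x = c x) \<and> (\<forall>x\<in>D-A. c x < t x)}"
  using fin AD
proof (induction A rule: finite_induct)
  case empty
  then show ?case using ort by simp
next
  case (insert a A)
  show ?case
  proof (intro allI impI)
    fix c :: "nat \<Rightarrow> nat" assume c1: "\<forall>x\<in>insert a A. 1 \<le> c x"
    let ?c' = "c(a := c a - 1)"
    let ?G = "\<lambda>A c. {t. (\<forall>x\<in>A. t x = c x) \<and> (\<forall>x\<in>D-A. c x < t x)}"
    have aD: "a \<in> D" using insert by auto
    have un: "?G A ?c' = ?G (insert a A) c \<union> ?G A c"
    proof (intro set_eqI iffI)
      fix t assume t: "t \<in> ?G A ?c'"
      have eqA: "\<forall>x\<in>A. t x = c x" using t insert(2) by (auto split: if_splits)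
      have gt: "\<forall>x\<in>D-insert a A. c x < t x"
      proof
        fix x assume x: "x \<in> D - insert a A"
        then have xx: "x \<in> D - A" "x \<noteq> a" by auto
        have "\<forall>x\<in>D-A. ?c' x < t x" using t by blast
        then have "?c' x < t x" using xx(1) by blast
        then show "c x < t x" using xx(2) by simp
      qed
      have aDA: "a \<in> D - A" using aD insert(2) by blast
      have "\<forall>x\<in>D-A. ?c' x < t x" using t by blast
      then have "?c' a < t a" using aDA by blast
      then have "c a - 1 < t a" by simp
      then have "t a = c a \<or> c a < t a" using c1 by auto
      then show "t \<in> ?G (insert a A) c \<union> ?G A c" using eqA gt by auto
    next
      fix t assume t: "t \<in> ?G (insert a A) c \<union> ?G A c"
      have aDA: "a \<in> D - A" using aD insert(2) by blast
      have "t a = c a \<or> c a < t a"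
      proof (cases "t \<in> ?G A c")
        case True
        then have "\<forall>x\<in>D-A. c x < t x" by blast
        then show ?thesis using aDA by blast
      qed (use t in auto)
      then have "?c' a < t a" using c1 by auto
      moreover have "\<forall>x\<in>A. t x = ?c' x" using t insert(2) by auto
      moreover have "\<forall>x\<in>D-A-{a}. ?c' x < t x" using t by auto
      ultimately show "t \<in> ?G A ?c'" by auto
    qed
    have disj: "?G (insert a A) c \<inter> ?G A c = {}"
    proof -
      have aDA: "a \<in> D - A" using aD insert(2) by blast
      have "t \<notin> ?G A c" if "t a = c a" for t
      proof
        assume "t \<in> ?G A c"
        then have "\<forall>x\<in>D-A. c x < t x" by blast
        then have "c a < t a" using aDA by blast
        with that show False by simp
      qed
      then show ?thesis by blast
    qed
    have dec: "measure M (?G (insert a A) c) = measure M (?G A ?c') - measure M (?G A c)"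
      if "finite_measure M" "sets M = UNIV" for M :: "(nat \<Rightarrow> nat) measure"
    proof -
      interpret finite_measure M by (rule that(1))
      have "measure M (?G A ?c') = measure M (?G (insert a A) c) + measure M (?G A c)"
        unfolding un by (rule finite_measure_Union) (use that(2) disj in auto)
      then show ?thesis by simp
    qed
    have IH1: "measure M1 (?G A ?c') = measure M2 (?G A ?c')"
      using insert.IH insert(4) c1 insert(2) by auto
    have IH2: "measure M1 (?G A c) = measure M2 (?G A c)"
      using insert.IH insert(4) c1 by auto
    show "measure M1 (?G (insert a A) c) = measure M2 (?G (insert a A) c)"
      using dec[OF fm(1) sets(1)] dec[OF fm(2) sets(2)] IH1 IH2 by simp
  qed
qed

lemma main_eq:
  assumes supp: "\<forall>t \<in> set_pmf P. (\<forall>i \<in> {1..d}. t i \<ge> 1) \<and> (\<forall>i. i \<notin> {1..d} \<longrightarrow> t i = 0)"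
    and adm: "wsg_admissible d p"
    and ort: "\<And>c. measure_pmf.prob P {t. \<forall>x\<in>{1..d}. c x < t x}
                = measure (wsg_law d p) {t. \<forall>x\<in>{1..d}. c x < t x}"
  shows "measure_pmf P = wsg_law d p"
proof -
  let ?Q = "wsg_law d p"
  let ?\<Omega> = "{t \<in> Cset d. \<forall>x\<in>{1..d}. 1 \<le> t x}"
  let ?M = "stream_space (measure_pmf (trial_pmf d p))"
  interpret Q: prob_space ?Q unfolding wsg_law_def
    by (rule prob_space.prob_space_distr[OF prob_space.prob_space_stream_space[OF measure_pmf.prob_space_axioms] wsg_vec_meas])
  have setsQ: "sets ?Q = UNIV" by (simp add: wsg_law_def)
  have aeP: "AE t in measure_pmf P. t \<in> ?\<Omega>"
    by (rule AE_pmfI) (use supp in \<open>auto simp: Cset_def\<close>)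
  have aeQ: "AE t in ?Q. t \<in> ?\<Omega>"
    unfolding wsg_law_def
  proof (subst AE_distr_iff[OF wsg_vec_meas])
    show "{x \<in> space (count_space UNIV). x \<in> ?\<Omega>} \<in> sets (count_space UNIV)" by simp
    show "AE \<omega> in ?M. wsg_vec d \<omega> \<in> ?\<Omega>"
      using tau_fin_AE[OF adm]
    proof (rule eventually_mono)
      fix \<omega> assume fin: "\<forall>x\<in>{1..d}. wsg_tau d \<omega> x \<noteq> \<infinity>"
      have "1 \<le> wsg_vec d \<omega> x" if x: "x \<in> {1..d}" for x
      proof -
        have "wsg_tau d \<omega> x \<noteq> \<infinity>" using fin x by blast
        then obtain v where v: "wsg_tau d \<omega> x = enat v" by (cases "wsg_tau d \<omega> x") auto
        have "enat 0 < wsg_tau d \<omega> x" using tau_gt[OF x, of 0] by simp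
        then show ?thesis using v x by (simp add: wsg_vec_def)
      qed
      then show "wsg_vec d \<omega> \<in> ?\<Omega>" by (auto simp: Cset_def wsg_vec_def)
    qed
  qed
  have cnt: "countable ?\<Omega>" by (rule countable_subset[OF _ countable_Cset[of d]]) auto
  show ?thesis
  proof (rule measure_eqI_countable_AE[OF _ setsQ aeP aeQ cnt])
    show "sets (measure_pmf P) = UNIV" by simp
  next
    fix t assume t: "t \<in> ?\<Omega>"
    let ?G = "{s. (\<forall>x\<in>{1..d}. s x = t x) \<and> (\<forall>x\<in>{1..d}-{1..d}. t x < s x)}"
    have G: "\<forall>c. (\<forall>x\<in>{1..d}. 1 \<le> c x) \<longrightarrow>
      measure (measure_pmf P) {s. (\<forall>x\<in>{1..d}. s x = c x) \<and> (\<forall>x\<in>{1..d}-{1..d}. c x < s x)}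
    = measure ?Q {s. (\<forall>x\<in>{1..d}. s x = c x) \<and> (\<forall>x\<in>{1..d}-{1..d}. c x < s x)}"
      by (rule G_ind[OF measure_pmf.finite_measure_axioms Q.finite_measure_axioms _ setsQ ort]) auto
    have "measure (measure_pmf P) {t} = measure (measure_pmf P) ?G"
      by (rule prob_support_eq) (use supp t in \<open>auto simp: Cset_def fun_eq_iff\<close>)
    also have "\<dots> = measure ?Q ?G" using G t by auto
    also have "\<dots> = measure ?Q {t}"
    proof (rule measure_eq_AE)
      show "AE s in ?Q. (s \<in> ?G) = (s \<in> {t})"
        using aeQ by (rule eventually_mono) (use t in \<open>auto simp: Cset_def fun_eq_iff\<close>)
    qed (auto simp: setsQ)
    finally have "measure (measure_pmf P) {t} = measure ?Q {t}" .
    then show "emeasure (measure_pmf P) {t} = emeasure ?Q {t}"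
      by (simp add: measure_pmf.emeasure_eq_measure Q.emeasure_eq_measure)
  qed
qed



definition EI :: "nat \<Rightarrow> nat set \<Rightarrow> (nat \<Rightarrow> nat) set" where
  "EI d I = {t. (\<forall>i \<in> {1..d} - I. t i > 1) \<and> (\<forall>i \<in> I. t i = 1)}"

lemma aP_ell:
  assumes supp: "\<forall>t \<in> set_pmf P. (\<forall>i \<in> {1..d}. t i \<ge> 1) \<and> (\<forall>i. i \<notin> {1..d} \<longrightarrow> t i = 0)"
    and K: "K \<subseteq> {1..d}"
  shows "aP P K = ell d (\<lambda>I. measure_pmf.prob P (EI d I)) K"
proof -
  let ?S = "{I\<in>Pow {1..d}. I \<inter> K = {}}"
  have disj: "disjoint_family_on (EI d) ?S"
    unfolding disjoint_family_on_def
  proof (intro ballI impI)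
    fix I I' assume I: "I \<in> ?S" and I': "I' \<in> ?S" and ne: "I \<noteq> I'"
    show "EI d I \<inter> EI d I' = {}"
    proof (rule ccontr)
      assume "EI d I \<inter> EI d I' \<noteq> {}"
      then obtain t where t: "t \<in> EI d I" "t \<in> EI d I'" by blast
      from ne obtain x where "x \<in> I \<and> x \<notin> I' \<or> x \<in> I' \<and> x \<notin> I" by blast
      then show False
      proof
        assume h: "x \<in> I \<and> x \<notin> I'"
        then have "x \<in> {1..d} - I'" using I by blast
        then have "t x > 1" using t(2) unfolding EI_def by blast
        moreover have "t x = 1" using t(1) h unfolding EI_def by blast
        ultimately show False by simp
      next
        assume h: "x \<in> I' \<and> x \<notin> I"
        then have "x \<in> {1..d} - I" using I' by blast
        then have "t x > 1" using t(1) unfolding EI_def by blast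
        moreover have "t x = 1" using t(2) h unfolding EI_def by blast
        ultimately show False by simp
      qed
    qed
  qed
  have "ell d (\<lambda>I. measure_pmf.prob P (EI d I)) K = measure_pmf.prob P (\<Union>I\<in>?S. EI d I)"
    unfolding ell_def by (rule measure_pmf.finite_measure_finite_Union[symmetric]) (use disj in auto)
  also have "\<dots> = aP P K" unfolding aP_def
  proof (rule prob_support_eq)
    fix t assume t: "t \<in> set_pmf P"
    show "t \<in> (\<Union>I\<in>?S. EI d I) \<longleftrightarrow> t \<in> {t. \<forall>x\<in>K. 1 < t x}"
    proof
      assume "t \<in> (\<Union>I\<in>?S. EI d I)"
      then show "t \<in> {t. \<forall>x\<in>K. 1 < t x}" using K by (auto simp: EI_def)
    next
      assume h: "t \<in> {t. \<forall>x\<in>K. 1 < t x}"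
      let ?I = "{x\<in>{1..d}. t x = 1}"
      have "?I \<in> ?S" using h by auto
      moreover have "t \<in> EI d ?I"
      proof -
        have tp: "\<forall>i\<in>{1..d}. 1 \<le> t i" using supp t by blast
        have "\<forall>i\<in>{1..d} - ?I. t i > 1"
        proof
          fix i assume i: "i \<in> {1..d} - ?I"
          then have "1 \<le> t i" using tp by blast
          moreover have "t i \<noteq> 1" using i by blast
          ultimately show "t i > 1" by simp
        qed
        then show ?thesis unfolding EI_def by blast
      qed
      ultimately show "t \<in> (\<Union>I\<in>?S. EI d I)" by blast
    qed
  qed
  finally show ?thesis by simp
qed

lemma aP_single_lt1:
  assumes lmp: "local_lmp d P"
    and supp: "\<forall>t \<in> set_pmf P. (\<forall>i \<in> {1..d}. t i \<ge> 1) \<and> (\<forall>i. i \<notin> {1..d} \<longrightarrow> t i = 0)"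
    and k: "k \<in> {1..d}"
  shows "aP P {k} < 1"
proof (rule ccontr)
  assume "\<not> aP P {k} < 1"
  moreover have "aP P {k} \<le> 1" by (simp add: aP_def)
  ultimately have a1: "aP P {k} = 1" by simp
  obtain t0 where t0: "t0 \<in> set_pmf P" using set_pmf_not_empty[of P] by blast
  let ?n = "t0 k"
  let ?c = "\<lambda>x. if x = k then ?n else 0"
  have "measure_pmf.prob P {t. \<forall>x\<in>{1..d}. ?c x < t x} = (\<Prod>r<?n. aP P {x\<in>{1..d}. r < ?c x})"
    by (rule P_orth[OF lmp supp]) auto
  also have "\<dots> = (\<Prod>r<?n. aP P {k})"
    by (rule prod.cong) (use k in \<open>auto intro!: arg_cong[where f="aP P"]\<close>)
  also have "\<dots> = 1" using a1 by simp
  finally have p1: "measure_pmf.prob P {t. \<forall>x\<in>{1..d}. ?c x < t x} = 1" .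
  have notin: "t0 \<notin> {t. \<forall>x\<in>{1..d}. ?c x < t x}" using k by auto
  have "measure_pmf.prob P ({t. \<forall>x\<in>{1..d}. ?c x < t x} \<union> {t0})
      = measure_pmf.prob P {t. \<forall>x\<in>{1..d}. ?c x < t x} + measure_pmf.prob P {t0}"
    by (rule measure_pmf.finite_measure_Union) (use notin in auto)
  moreover have "measure_pmf.prob P ({t. \<forall>x\<in>{1..d}. ?c x < t x} \<union> {t0}) \<le> 1"
    by (rule measure_pmf.prob_le_1)
  moreover have "measure_pmf.prob P {t0} > 0"
    using pmf_positive[OF t0] by (simp add: measure_pmf_single)
  ultimately show False using p1 by simp
qed

lemma part2:
  assumes lmp: "local_lmp d P"
    and supp: "\<forall>t \<in> set_pmf P. (\<forall>i \<in> {1..d}. t i \<ge> 1) \<and> (\<forall>i. i \<notin> {1..d} \<longrightarrow> t i = 0)"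
  shows "wsg_admissible d (\<lambda>I. measure_pmf.prob P (EI d I)) \<and>
         measure_pmf P = wsg_law d (\<lambda>I. measure_pmf.prob P (EI d I))"
proof -
  let ?p = "\<lambda>I. measure_pmf.prob P (EI d I)"
  have adm: "wsg_admissible d ?p"
    unfolding wsg_admissible_def
  proof (intro conjI ballI)
    fix I show "0 \<le> ?p I" by simp
    show "?p I \<le> 1" by simp
  next
    have "(\<Sum>I\<in>Pow {1..d}. ?p I) = ell d ?p {}"
      unfolding ell_def by (rule sum.cong) auto
    also have "\<dots> = aP P {}" using aP_ell[OF supp, of "{}"] by simp
    finally show "(\<Sum>I\<in>Pow {1..d}. ?p I) = 1" by (simp add: aP_empty)
  next
    fix k assume k: "k \<in> {1..d}"
    have "(\<Sum>I\<in>{I \<in> Pow {1..d}. k \<notin> I}. ?p I) = ell d ?p {k}"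
      unfolding ell_def by (rule sum.cong) auto
    also have "\<dots> = aP P {k}" using aP_ell[OF supp, of "{k}"] k by simp
    finally show "(\<Sum>I\<in>{I \<in> Pow {1..d}. k \<notin> I}. ?p I) < 1"
      using aP_single_lt1[OF lmp supp k] by simp
  qed
  have ort: "measure_pmf.prob P {t. \<forall>x\<in>{1..d}. c x < t x}
                = measure (wsg_law d ?p) {t. \<forall>x\<in>{1..d}. c x < t x}" for c
  proof -
    let ?N = "\<Sum>x\<in>{1..d}. c x"
    have cN: "\<forall>x\<in>{1..d}. c x \<le> ?N" by (auto intro: member_le_sum)
    have "measure_pmf.prob P {t. \<forall>x\<in>{1..d}. c x < t x} = (\<Prod>r<?N. aP P {x\<in>{1..d}. r < c x})"
      by (rule P_orth[OF lmp supp cN])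
    also have "\<dots> = (\<Prod>r<?N. ell d ?p {x\<in>{1..d}. r < c x})"
      by (rule prod.cong) (auto intro!: aP_ell[OF supp])
    also have "\<dots> = (\<Prod>r<?N. ell d ?p {(\<lambda>j. j) j | j. j \<in> {1..d} \<and> r < c j})"
      by (rule prod.cong) (auto intro!: arg_cong[where f="ell d ?p"])
    also have "\<dots> = measure (wsg_law d ?p) {t. \<forall>j\<in>{1..d}. c j < t ((\<lambda>j. j) j)}"
      by (rule gen_formula[OF adm _ cN, symmetric]) auto
    finally show ?thesis by simp
  qed
  show ?thesis using adm main_eq[OF supp adm ort] by simp
qed

theorem theorem2p2:
  fixes d :: nat and P :: "(nat \<Rightarrow> nat) pmf"
  assumes "d \<ge> 1"
    and "\<forall>t \<in> set_pmf P. (\<forall>i \<in> {1..d}. t i \<ge> 1) \<and> (\<forall>i. i \<notin> {1..d} \<longrightarrow> t i = 0)"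
  shows "(local_lmp d P \<longleftrightarrow>
            (\<exists>p. wsg_admissible d p \<and> measure_pmf P = wsg_law d p))
       \<and> (local_lmp d P \<longrightarrow>
            (let p = (\<lambda>I. measure_pmf.prob P
                        {t. (\<forall>i \<in> {1..d} - I. t i > 1) \<and> (\<forall>i \<in> I. t i = 1)})
             in wsg_admissible d p \<and> measure_pmf P = wsg_law d p))"
proof -
  have p2: "local_lmp d P \<longrightarrow>
            (let p = (\<lambda>I. measure_pmf.prob P
                        {t. (\<forall>i \<in> {1..d} - I. t i > 1) \<and> (\<forall>i \<in> I. t i = 1)})
             in wsg_admissible d p \<and> measure_pmf P = wsg_law d p)"
    using part2[OF _ assms(2)] unfolding EI_def Let_def by blast
  moreover have "local_lmp d P \<longleftrightarrow> (\<exists>p. wsg_admissible d p \<and> measure_pmf P = wsg_law d p)"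
  proof
    assume "local_lmp d P"
    then show "\<exists>p. wsg_admissible d p \<and> measure_pmf P = wsg_law d p"
      using p2 unfolding Let_def by blast
  next
    assume "\<exists>p. wsg_admissible d p \<and> measure_pmf P = wsg_law d p"
    then show "local_lmp d P" using wsg_lmp by blast
  qed
  ultimately show ?thesis by blast
qed


end
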